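(* For $\lambda>0$ and $c>0$, let $V\sim\mathrm{Exp}(\lambda)$ and define the creator's expected profit $$P(p_0,r)=\mathbb{E}\big[(p_0+rV)\,\mathbb{1}_{\{(1-r)V\ge p_0\}}\big]+p_0\,\Pr\big[(1-r)V<p_0\le V\big]-c,\qquad p_0\ge 0,\ r\in[0,1].$$ Let $u_c^*=\sup_{p_0\ge 0,r\in[0,1]}P(p_0,r)$ and $u_{c,r=0}^*=\sup_{p_0\ge0}P(p_0,0)$. Then the set $\mathbb{T}=\{(\lambda,c):\ u_c^*\ge 0,\ u_{c,r=0}^*<0,\ \lambda>0,\ c>0\}$ is non-empty.
   Context: Interpretation: information-asymmetry model in which a speculator observes the realized end-buyer valuation $v$, buys at price $p_0$ iff $(1-r)v\ge p_0$ and resells at $v$ paying royalty $rv$ to the creator; otherwise the creator sells directly to the end-buyer at $p_0$ iff $v\ge p_0$. $c$ is the creator's cost. Trade occurs iff the optimal profit is nonnegative. *)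

theory Defs
  imports "HOL-Probability.Probability"
begin

definition exp_law :: "real \<Rightarrow> real measure" where
  "exp_law l = density lborel (exponential_density l)"

definition creator_profit :: "real \<Rightarrow> real \<Rightarrow> real \<Rightarrow> real \<Rightarrow> real" where
  "creator_profit l c p0 r =
     (\<integral>v. (p0 + r * v) * indicator {v. (1 - r) * v \<ge> p0} v \<partial>exp_law l)
     + p0 * measure (exp_law l) {v. (1 - r) * v < p0 \<and> p0 \<le> v}
     - c"

definition u_star :: "real \<Rightarrow> real \<Rightarrow> real" where
  "u_star l c = (SUP pr \<in> {(p0, r). p0 \<ge> 0 \<and> 0 \<le> r \<and> r \<le> 1}. creator_profit l c (fst pr) (snd pr))"

definition u_star_r0 :: "real \<Rightarrow> real \<Rightarrow> real" where
  "u_star_r0 l c = (SUP p0 \<in> {0..}. creator_profit l c p0 0)"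

end

theory Submission
  imports Defs
begin
lemma M_prob: "prob_space (exp_law 1)"
  unfolding exp_law_def by (rule prob_space_exponential_density) simp
lemma sets_M[simp]: "sets (exp_law l) = sets borel"
  by (simp add: exp_law_def)
lemma space_M[simp]: "space (exp_law l) = UNIV"
  by (simp add: exp_law_def)
lemma D: "distributed (exp_law 1) lborel (\<lambda>x. x) (exponential_density 1)"
  unfolding distributed_def
  by (auto simp: distr_id2 exp_law_def)
lemma mean: "(\<integral>v. v \<partial>exp_law 1) = 1"
  using prob_space.exponential_distributed_expectation[OF M_prob _ D] by simp
lemma single: "{a} \<in> null_sets (exp_law 1)"
proof -
  have "emeasure (exp_law 1) {a} = 0"
  unfolding exp_law_def
  apply (subst emeasure_density)
  apply simp apply simp
  apply (rule nn_integral_null_set) 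
  by (simp add: null_sets_def)
  then show ?thesis by (simp add: null_sets_def)
qed
lemma gt: "0 \<le> a \<Longrightarrow> measure (exp_law 1) {x. a < x} = exp (-a)"
  using prob_space.exponential_distributedD_gt[OF M_prob D, of a] by simp
lemma ge: "0 \<le> a \<Longrightarrow> measure (exp_law 1) {x. a \<le> x} = exp (-a)"
proof -
  assume a: "0 \<le> a"
  have "{x. a \<le> x} = {x. a < x} \<union> {a}" by auto
  then have "measure (exp_law 1) {x. a \<le> x} = measure (exp_law 1) {x. a < x}"
    using measure_Un_null_set[OF _ single, of "{x. a < x}"] by simp
  then show ?thesis using gt[OF a] by simp
qed
lemma AEnn: "AE v in exp_law 1. 0 \<le> v"
  unfolding exp_law_def
  by (subst AE_density) (auto simp: exponential_density_def)
lemma integ: "integrable (exp_law 1) (\<lambda>v. v)"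
  using prob_space.erlang_ith_moment_integrable[OF M_prob _ D, of 1] by simp
lemma pexp: "(p::real) * exp (-p) \<le> exp (-1)"
proof -
  have "p \<le> exp (p - 1)" using exp_ge_add_one_self[of "p-1"] by simp
  then have "p * exp (-p) \<le> exp (p-1) * exp (-p)" by (simp add: mult_right_mono)
  also have "\<dots> = exp (-1)" by (simp flip: exp_add)
  finally show ?thesis .
qed
lemma em1: "exp (-1::real) \<le> 1/2"
proof -
  have "2 \<le> exp (1::real)" using exp_ge_add_one_self[of 1] by simp
  then show ?thesis by (simp add: exp_minus field_simps)
qed

lemma r0: "0 \<le> p0 \<Longrightarrow> creator_profit 1 c p0 0 = p0 * exp (-p0) - c"
proof -
  assume p: "0 \<le> p0"
  have "(\<integral>v. (p0 + 0 * v) * indicator {v. (1 - 0) * v \<ge> p0} v \<partial>exp_law 1)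
     = p0 * measure (exp_law 1) {v. p0 \<le> v}" by simp
  also have "\<dots> = p0 * exp (-p0)" using ge[OF p] by simp
  finally have e: "(\<integral>v. (p0 + 0 * v) * indicator {v. (1 - 0) * v \<ge> p0} v \<partial>exp_law 1) = p0 * exp (-p0)" .
  have emp: "{v. (1 - 0) * v < p0 \<and> p0 \<le> v} = {}" by auto
  show ?thesis unfolding creator_profit_def e emp by simp
qed
lemma bound:
  assumes p: "0 \<le> p0" and r: "0 \<le> r" "r \<le> 1"
  shows "creator_profit 1 c p0 r \<le> 2 - c"
proof -
  let ?f = "\<lambda>v. (p0 + r * v) * indicator {v. (1 - r) * v \<ge> p0} v"
  have t1: "(\<integral>v. ?f v \<partial>exp_law 1) \<le> 1"
  proof (cases "integrable (exp_law 1) ?f")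
    case True
    have "(\<integral>v. ?f v \<partial>exp_law 1) \<le> (\<integral>v. v \<partial>exp_law 1)"
    proof (rule integral_mono_AE[OF True integ])
      show "AE v in exp_law 1. ?f v \<le> v"
        using AEnn by eventually_elim (auto simp: indicator_def algebra_simps)
    qed
    then show ?thesis using mean by simp
  next
    case False
    then show ?thesis by (simp add: not_integrable_integral_eq)
  qed
  have ms: "{v::real. (1 - r) * v < p0 \<and> p0 \<le> v} \<in> sets borel" by measurable
  have ms2: "{v::real. p0 \<le> v} \<in> sets borel" by measurable
  interpret prob_space "exp_law 1" by (rule M_prob)
  have "measure (exp_law 1) {v. (1 - r) * v < p0 \<and> p0 \<le> v} \<le> measure (exp_law 1) {v. p0 \<le> v}"
    using ms ms2 by (intro finite_measure_mono) auto
  then have "p0 * measure (exp_law 1) {v. (1 - r) * v < p0 \<and> p0 \<le> v} \<le> p0 * exp (-p0)"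
    using ge[OF p] p by (simp add: mult_left_mono)
  also have "\<dots> \<le> 1" using pexp[of p0] em1 by simp
  finally show ?thesis using t1 unfolding creator_profit_def by simp
qed

theorem corollary5:
  shows "{(l, c). u_star l c \<ge> 0 \<and> u_star_r0 l c < 0 \<and> l > 0 \<and> c > 0} \<noteq> ({} :: (real \<times> real) set)"
proof -
  have a: "u_star 1 (3/4) \<ge> 0"
  proof -
    have v: "creator_profit 1 (3/4) 0 1 = 1/4"
      unfolding creator_profit_def using mean by simp
    have "creator_profit 1 (3/4) (fst (0::real,1::real)) (snd (0::real,1::real))
        \<le> u_star 1 (3/4)"
      unfolding u_star_def
    proof (rule cSUP_upper)
      show "(0::real, 1::real) \<in> {(p0, r). p0 \<ge> 0 \<and> 0 \<le> r \<and> r \<le> 1}" by simp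
      show "bdd_above ((\<lambda>pr. creator_profit 1 (3/4) (fst pr) (snd pr)) ` {(p0, r). p0 \<ge> 0 \<and> 0 \<le> r \<and> r \<le> (1::real)})"
      proof (rule bdd_aboveI[where M="2 - 3/4"])
        fix x assume "x \<in> (\<lambda>pr. creator_profit 1 (3/4) (fst pr) (snd pr)) ` {(p0, r). p0 \<ge> 0 \<and> 0 \<le> r \<and> r \<le> (1::real)}"
        then obtain p0 r where "x = creator_profit 1 (3/4) p0 r" "0 \<le> p0" "0 \<le> r" "r \<le> 1" by auto
        then show "x \<le> 2 - 3/4" using bound[of p0 r "3/4"] by simp
      qed
    qed
    then show ?thesis using v by simp
  qed
  have b: "u_star_r0 1 (3/4) \<le> exp (-1) - 3/4"
    unfolding u_star_r0_def
  proof (rule cSUP_least)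
    show "{0::real..} \<noteq> {}" by auto
    fix p0 :: real assume "p0 \<in> {0..}"
    then show "creator_profit 1 (3/4) p0 0 \<le> exp (-1) - 3/4"
      using r0[of p0] pexp[of p0] by simp
  qed
  have "(1::real, 3/4::real) \<in> {(l, c). u_star l c \<ge> 0 \<and> u_star_r0 l c < 0 \<and> l > 0 \<and> c > 0}"
    using a b em1 by simp
  then show ?thesis by blast
qed
end
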